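(* There is a constant $C$, depending only on $\Gamma$ and $V$, such that every $(g,a)\in\Gamma$ satisfies $\|a_\perp\|\le C$. Moreover, if $(g,a)\in\Gamma_1$, then $a_\perp=0$.
   Context: $E(n)$ is the Euclidean group, with elements $(g,a)$, $g\in O(n)$, $a\in\mathbb R^n$, acting by $(g,a)x=gx+a$. $\Gamma\subset E(n)$ is a discrete, fixed-point-free subgroup. $\Gamma^*$ is the intersection of $\Gamma$ with the identity component of the closure of $\Gamma\cdot\mathbb R^n$ in $E(n)$. By a theorem of Wolf, $\Gamma^*$ is a normal subgroup of $\Gamma$ of finite index. There exist a subspace $V\subset\mathbb R^n$ and a toral subgroup $T\subset O(n)$ such that: - $T$ acts trivially on $V$; - $\Gamma^*\subset T\cdot V$, so every $(h,b)\in\Gamma^*$ has $b\in V$; - $\Gamma^*$ is isomorphic to a discrete uniform subgroup of $V$. Write $\mathbb R^n=V_\perp\oplus V$ orthogonally, and for $a\in\mathbb R^n$ write $a=a_\perp+a_=$ with $a_\perp\in V_\perp$ and $a_=\in V$. Define $\Gamma_1=\{(g,a)\in\Gamma: g|_{V_\perp}=I_{V_\perp}\}$. *)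

theory Defs
  imports "HOL-Analysis.Analysis"
begin

text \<open>Elements of the Euclidean group E(n) are pairs (g,a) with g an orthogonal
  n x n matrix and a a vector; (g,a) acts by x \<mapsto> g x + a.\<close>

type_synonym 'n euc = "(real^'n^'n) \<times> (real^'n)"

definition euc_group :: "'n::finite euc set" where
  "euc_group = {(g, a). orthogonal_matrix g}"

definition euc_mult :: "'n::finite euc \<Rightarrow> 'n euc \<Rightarrow> 'n euc" where
  "euc_mult x y = (fst x ** fst y, fst x *v snd y + snd x)"

definition euc_one :: "'n::finite euc" where
  "euc_one = (mat 1, 0)"

definition euc_inv :: "'n::finite euc \<Rightarrow> 'n euc" where
  "euc_inv x = (transpose (fst x), - (transpose (fst x) *v snd x))"

definition euc_subgroup :: "'n::finite euc set \<Rightarrow> bool" where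
  "euc_subgroup G \<longleftrightarrow> G \<subseteq> euc_group \<and> euc_one \<in> G \<and>
     (\<forall>x\<in>G. \<forall>y\<in>G. euc_mult x y \<in> G) \<and> (\<forall>x\<in>G. euc_inv x \<in> G)"

text \<open>Discrete: every point is isolated (in the topology of matrices x vectors,
  i.e. the subspace topology of E(n)).\<close>
definition discrete_set :: "'a::topological_space set \<Rightarrow> bool" where
  "discrete_set S \<longleftrightarrow> (\<forall>x\<in>S. \<exists>U. open U \<and> x \<in> U \<and> U \<inter> S = {x})"

definition fixed_point_free :: "'n::finite euc set \<Rightarrow> bool" where
  "fixed_point_free G \<longleftrightarrow> (\<forall>x\<in>G. x \<noteq> euc_one \<longrightarrow> (\<forall>p. fst x *v p + snd x \<noteq> p))"

definition Gamma_trans :: "'n::finite euc set \<Rightarrow> 'n euc set" where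
  "Gamma_trans G = {euc_mult x (mat 1, b) | x b. x \<in> G}"

text \<open>\<Gamma>^* = \<Gamma> \<inter> identity component of the closure of \<Gamma>\<cdot>R^n.
  E(n) is closed in the ambient space, so the closure in E(n) is the ambient closure.\<close>
definition Gamma_star :: "'n::finite euc set \<Rightarrow> 'n euc set" where
  "Gamma_star G = G \<inter> connected_component_set (closure (Gamma_trans G)) euc_one"

text \<open>A toral subgroup of O(n): a closed connected commutative subgroup of O(n)
  (i.e. a compact connected abelian Lie subgroup, a torus).\<close>
definition toral_subgroup :: "(real^'n^'n::finite) set \<Rightarrow> bool" where
  "toral_subgroup T \<longleftrightarrow> (\<forall>t\<in>T. orthogonal_matrix t) \<and> mat 1 \<in> T \<and>
     (\<forall>s\<in>T. \<forall>t\<in>T. s ** t \<in> T) \<and> (\<forall>t\<in>T. transpose t \<in> T) \<and>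
     closed T \<and> connected T \<and> (\<forall>s\<in>T. \<forall>t\<in>T. s ** t = t ** s)"

definition perp_space :: "(real^'n::finite) set \<Rightarrow> (real^'n) set" where
  "perp_space V = {x. \<forall>v\<in>V. inner x v = 0}"

definition perp_part :: "(real^'n::finite) set \<Rightarrow> real^'n \<Rightarrow> real^'n" where
  "perp_part V a = (THE p. p \<in> perp_space V \<and> a - p \<in> V)"

end

theory Submission
  imports Defs
begin

lemma orth_inner:
  fixes g :: "real^'n::finite^'n"
  assumes "orthogonal_matrix g"
  shows "(g *v x) \<bullet> (g *v y) = x \<bullet> y"
proof -
  have "orthogonal_transformation ((*v) g)"
    using assms by (simp add: orthogonal_transformation_matrix matrix_of_matrix_vector_mul)
  then show ?thesis by (simp add: orthogonal_transformation_def)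
qed

lemma orth_norm:
  fixes g :: "real^'n::finite^'n"
  assumes "orthogonal_matrix g"
  shows "norm (g *v x) = norm x"
  using orth_inner[OF assms, of x x] by (simp add: norm_eq_sqrt_inner)

lemma perp_space_eq: "perp_space V = orthogonal_comp V"
  by (auto simp: perp_space_def orthogonal_comp_def orthogonal_def inner_commute)

lemma perp_char:
  fixes V :: "(real^'n::finite) set"
  assumes V: "subspace V" and p: "p \<in> perp_space V" and ap: "a - p \<in> V"
  shows "perp_part V a = p"
  unfolding perp_part_def
proof (rule the_equality)
  show "p \<in> perp_space V \<and> a - p \<in> V" using p ap by simp
next
  fix q assume q: "q \<in> perp_space V \<and> a - q \<in> V"
  have "p - q = (a - q) - (a - p)" by simp
  hence "p - q \<in> V" using q ap V by (metis subspace_diff)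
  moreover have "p - q \<in> perp_space V" using p q
    by (simp add: perp_space_eq subspace_diff subspace_orthogonal_comp)
  ultimately have "p - q \<in> V \<inter> orthogonal_comp V" by (simp add: perp_space_eq)
  then show "q = p" using orthogonal_Int_0[OF V] by auto
qed

lemma perp_ex:
  fixes V :: "(real^'n::finite) set"
  assumes V: "subspace V"
  shows "perp_part V a \<in> perp_space V \<and> a - perp_part V a \<in> V"
proof -
  have "a \<in> V + orthogonal_comp V" using subspace_sum_orthogonal_comp[OF V] by simp
  then obtain v w where "a = v + w" "v \<in> V" "w \<in> orthogonal_comp V"
    using set_plus_elim by blast
  then have "w \<in> perp_space V" "a - w \<in> V" by (auto simp: perp_space_eq)
  then show ?thesis using perp_char[OF V] by simp
qed

lemma perp_add_V:
  fixes V :: "(real^'n::finite) set"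
  assumes V: "subspace V" and v: "v \<in> V"
  shows "perp_part V (v + x) = perp_part V x"
proof -
  have "v + x - perp_part V x = v + (x - perp_part V x)" by simp
  also have "\<dots> \<in> V" using perp_ex[OF V, of x] v V by (simp add: subspace_add)
  finally show ?thesis using perp_char[OF V] perp_ex[OF V, of x] by blast
qed

lemma perp_norm:
  fixes V :: "(real^'n::finite) set"
  assumes V: "subspace V"
  shows "norm (perp_part V x) \<le> norm x"
proof -
  let ?p = "perp_part V x"
  have "?p \<in> perp_space V" "x - ?p \<in> V" using perp_ex[OF V] by auto
  hence o: "?p \<bullet> (x - ?p) = 0" unfolding perp_space_def by blast
  have "(norm (?p + (x - ?p)))\<^sup>2 = (norm ?p)\<^sup>2 + (norm (x - ?p))\<^sup>2"
    by (rule norm_add_Pythagorean) (use o in \<open>simp only: orthogonal_def\<close>)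
  hence "norm x ^ 2 = norm ?p ^ 2 + norm (x - ?p) ^ 2" by simp
  moreover have "0 \<le> norm (x - ?p) ^ 2" by (rule zero_le_power2)
  ultimately have "norm ?p ^ 2 \<le> norm x ^ 2" by linarith
  thus ?thesis by (rule power2_le_imp_le) (rule norm_ge_zero)
qed

lemma perp_add:
  fixes V :: "(real^'n::finite) set"
  assumes V: "subspace V"
  shows "perp_part V (x + y) = perp_part V x + perp_part V y"
proof (rule perp_char[OF V])
  show "perp_part V x + perp_part V y \<in> perp_space V"
    unfolding perp_space_eq
    by (rule subspace_add[OF subspace_orthogonal_comp]) (use perp_ex[OF V, of x] perp_ex[OF V, of y] perp_space_eq in auto)
  have e: "x + y - (perp_part V x + perp_part V y) = (x - perp_part V x) + (y - perp_part V y)"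
    by simp
  have "(x - perp_part V x) + (y - perp_part V y) \<in> V"
    by (rule subspace_add[OF V]) (use perp_ex[OF V, of x] perp_ex[OF V, of y] in blast)+
  then show "x + y - (perp_part V x + perp_part V y) \<in> V" by (simp only: e)
qed

lemma perp_scale:
  fixes V :: "(real^'n::finite) set"
  assumes V: "subspace V"
  shows "perp_part V (c *\<^sub>R x) = c *\<^sub>R perp_part V x"
proof (rule perp_char[OF V])
  show "c *\<^sub>R perp_part V x \<in> perp_space V"
    using perp_ex[OF V, of x]
    by (simp add: perp_space_eq subspace_scale subspace_orthogonal_comp)
  have "c *\<^sub>R x - c *\<^sub>R perp_part V x = c *\<^sub>R (x - perp_part V x)"
    by (simp add: scaleR_diff_right)
  then show "c *\<^sub>R x - c *\<^sub>R perp_part V x \<in> V"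
    using perp_ex[OF V, of x] V by (simp add: subspace_scale)
qed

lemma perp_fix:
  fixes V :: "(real^'n::finite) set" and g :: "real^'n^'n"
  assumes V: "subspace V" and og: "orthogonal_matrix g"
    and fx: "\<forall>x\<in>perp_space V. g *v x = x"
  shows "perp_part V (g *v z) = perp_part V z"
proof (rule perp_char[OF V])
  let ?p = "perp_part V z"
  show "?p \<in> perp_space V" using perp_ex[OF V] by auto
  have gp: "g *v ?p = ?p" using fx perp_ex[OF V] by auto
  have "g *v (z - ?p) \<in> orthogonal_comp (orthogonal_comp V)"
  proof -
    have "\<forall>u\<in>orthogonal_comp V. orthogonal u (g *v (z - ?p))"
    proof
      fix u assume u: "u \<in> orthogonal_comp V"
      hence "g *v u = u" using fx by (simp add: perp_space_eq)
      hence "u \<bullet> (g *v (z - ?p)) = (g *v u) \<bullet> (g *v (z - ?p))" by simp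
      also have "\<dots> = u \<bullet> (z - ?p)" using orth_inner[OF og] by simp
      also have "\<dots> = 0" using u perp_ex[OF V, of z]
      proof -
        have "z - ?p \<in> V" using perp_ex[OF V, of z] by blast
        hence "(z - ?p) \<bullet> u = 0" using u by (simp add: orthogonal_comp_def orthogonal_def)
        thus ?thesis by (simp add: inner_commute)
      qed
      finally show "orthogonal u (g *v (z - ?p))" by (simp add: orthogonal_def)
    qed
    thus ?thesis by (simp add: orthogonal_comp_def)
  qed
  hence "g *v (z - ?p) \<in> V" using orthogonal_comp_self[OF V] by simp
  moreover have "g *v z - ?p = g *v (z - ?p)" using gp by (simp add: matrix_vector_mult_diff_distrib)
  ultimately show "g *v z - ?p \<in> V" by simp
qed


theorem lemma3p2:
  fixes \<Gamma> :: "'n::finite euc set" and V :: "(real^'n) set" and T :: "(real^'n^'n) set"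
  assumes sub: "euc_subgroup \<Gamma>"
    and disc: "discrete_set \<Gamma>"
    and fpf: "fixed_point_free \<Gamma>"
    and normal: "\<forall>x\<in>\<Gamma>. \<forall>y\<in>Gamma_star \<Gamma>. euc_mult (euc_mult x y) (euc_inv x) \<in> Gamma_star \<Gamma>"
    and fin_index: "\<exists>F. finite F \<and> F \<subseteq> \<Gamma> \<and> \<Gamma> = (\<Union>f\<in>F. euc_mult f ` Gamma_star \<Gamma>)"
    and V: "subspace V"
    and T: "toral_subgroup T"
    and T_triv: "\<forall>t\<in>T. \<forall>v\<in>V. t *v v = v"
    and star_TV: "\<forall>y\<in>Gamma_star \<Gamma>. fst y \<in> T \<and> snd y \<in> V"
    and star_inj: "inj_on snd (Gamma_star \<Gamma>)"
    and lat_disc: "discrete_set (snd ` Gamma_star \<Gamma>)"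
    and lat_unif: "\<exists>K. compact K \<and> V \<subseteq> {l + k | l k. l \<in> snd ` Gamma_star \<Gamma> \<and> k \<in> K}"
  shows "(\<exists>C. \<forall>(g, a)\<in>\<Gamma>. norm (perp_part V a) \<le> C) \<and>
         (\<forall>(g, a)\<in>\<Gamma>. (\<forall>x\<in>perp_space V. g *v x = x) \<longrightarrow> perp_part V a = 0)"
proof -
  obtain F where F: "finite F" "F \<subseteq> \<Gamma>" "\<Gamma> = (\<Union>f\<in>F. euc_mult f ` Gamma_star \<Gamma>)"
    using fin_index by blast
  have Geuc: "\<Gamma> \<subseteq> euc_group" and one: "euc_one \<in> \<Gamma>"
    and mul: "\<forall>x\<in>\<Gamma>. \<forall>y\<in>\<Gamma>. euc_mult x y \<in> \<Gamma>"
    using sub by (auto simp: euc_subgroup_def)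
  define C where "C = (\<Sum>f\<in>F. norm (snd f))"
  have bound: "norm (perp_part V a) \<le> C" if ga: "(g, a) \<in> \<Gamma>" for g a
  proof -
    obtain f y where fy: "f \<in> F" "y \<in> Gamma_star \<Gamma>" "(g, a) = euc_mult f y"
      using ga F(3) by blast
    obtain fg fa where f: "f = (fg, fa)" by (cases f)
    obtain h b where y: "y = (h, b)" by (cases y)
    have ofg: "orthogonal_matrix fg" using fy(1) F(2) Geuc f by (auto simp: euc_group_def)
    have "h \<in> T" using star_TV fy(2) y by auto
    hence oh: "orthogonal_matrix h" using T by (auto simp: toral_subgroup_def)
    let ?c = "euc_mult (euc_mult f y) (euc_inv f)"
    have "?c \<in> Gamma_star \<Gamma>" using normal fy F(2) by blast
    hence cV: "snd ?c \<in> V" using star_TV by blast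
    have a: "a = fg *v b + fa" using fy(3) f y by (simp add: euc_mult_def)
    have sc: "snd ?c = (fg ** h) *v (- (transpose fg *v fa)) + a"
      using fy(3) f y by (simp add: euc_mult_def euc_inv_def)
    have a2: "a = snd ?c + (fg ** h) *v (transpose fg *v fa)"
    proof -
      have "(fg ** h) *v (- (transpose fg *v fa)) = - ((fg ** h) *v (transpose fg *v fa))"
        by (simp add: vec_eq_iff matrix_vector_mult_def sum_negf)
      then show ?thesis using sc by simp
    qed
    have "perp_part V a = perp_part V ((fg ** h) *v (transpose fg *v fa))"
      using a2 perp_add_V[OF V cV] by simp
    hence "norm (perp_part V a) \<le> norm ((fg ** h) *v (transpose fg *v fa))"
      using perp_norm[OF V] by simp
    also have "\<dots> = norm fa"
      using orth_norm[of "fg ** h"] orth_norm[of "transpose fg"] ofg oh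
      by (simp add: orthogonal_matrix_mul)
    also have "\<dots> \<le> C" unfolding C_def
      using member_le_sum[of f F "\<lambda>f. norm (snd f)"] fy(1) F(1) f by simp
    finally show ?thesis .
  qed
  have part2: "perp_part V a = 0" if ga: "(g, a) \<in> \<Gamma>" and fx: "\<forall>x\<in>perp_space V. g *v x = x" for g a
  proof -
    have og: "orthogonal_matrix g" using ga Geuc by (auto simp: euc_group_def)
    define pw where "pw k = ((euc_mult (g, a)) ^^ k) euc_one" for k
    have pwG: "pw k \<in> \<Gamma>" for k
      by (induction k) (use one mul ga in \<open>auto simp: pw_def\<close>)
    have p0: "perp_part V 0 = 0"
      by (rule perp_char[OF V]) (auto simp: perp_space_def V subspace_0)
    have pk: "perp_part V (snd (pw k)) = real k *\<^sub>R perp_part V a" for k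
    proof (induction k)
      case 0 then show ?case by (simp add: pw_def euc_one_def p0)
    next
      case (Suc k)
      have "snd (pw (Suc k)) = g *v snd (pw k) + a" by (simp add: pw_def euc_mult_def)
      hence "perp_part V (snd (pw (Suc k))) = perp_part V (snd (pw k)) + perp_part V a"
        using perp_add[OF V] perp_fix[OF V og fx] by simp
      then show ?case using Suc by (simp add: algebra_simps)
    qed
    have nb: "real k * norm (perp_part V a) \<le> C" for k
    proof -
      obtain gk ak where e: "pw k = (gk, ak)" by (cases "pw k")
      have "norm (perp_part V ak) \<le> C" using bound pwG[of k] e by simp
      thus ?thesis using pk[of k] e by simp
    qed
    show ?thesis
    proof (rule ccontr)
      assume "perp_part V a \<noteq> 0"
      hence pos: "norm (perp_part V a) > 0" by simp
      obtain k :: nat where "real k > C / norm (perp_part V a)" using reals_Archimedean2 by blast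
      hence "real k * norm (perp_part V a) > C" using pos by (simp add: field_simps)
      thus False using nb[of k] by simp
    qed
  qed
  show ?thesis using bound part2 by blast
qed

end
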